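(* Let $(\mathbf{P}_t)_{t\ge0}$ be a continuous-time Markov process on a countable state space $\mathcal{S}$ with stable conservative $Q$-matrix $Q=(q_{ij})$ satisfying $\sup_{i\in\mathcal{S}}q_i<\infty$. Then for every $t\ge0$, $$\inf_{i\ne j}\|\mathbf{p}^i(t)-\mathbf{p}^j(t)\|_{\mathrm{TV}}\ge\exp(-t\|Q\|)>0,$$ where $\|Q\|=\sup_i\sum_j|q_{ij}|=\sup_i2q_i$. In particular the process is initial-state identifiable.
   Context: $\mathbf{P}_t=(p_{ij}(t))$ is the transition matrix, $\mathbf{p}^i(t)$ its $i$-th row, $q_{ij}=p'_{ij}(0)\ge0$ for $i\ne j$, $q_i=-q_{ii}=\sum_{j\ne i}q_{ij}$. $\|\mu_1-\mu_2\|_{\mathrm{TV}}=\frac12\sum_\sigma|\mu_1(\sigma)-\mu_2(\sigma)|$. Initial-state identifiability: for every $t\in[0,\infty)$ all rows of $\mathbf{P}_t$ are distinct. *)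

theory Defs
  imports "HOL-Analysis.Analysis"
begin

definition transition_function :: "(real \<Rightarrow> 'a::countable \<Rightarrow> 'a \<Rightarrow> real) \<Rightarrow> bool" where
  "transition_function P \<longleftrightarrow>
     (\<forall>t\<ge>0. \<forall>i j. P t i j \<ge> 0) \<and>
     (\<forall>t\<ge>0. \<forall>i. ((\<lambda>j. P t i j) has_sum 1) UNIV) \<and>
     (\<forall>i j. P 0 i j = (if i = j then 1 else 0)) \<and>
     (\<forall>s\<ge>0. \<forall>t\<ge>0. \<forall>i j. P (s + t) i j = (\<Sum>\<^sub>\<infinity>k. P s i k * P t k j)) \<and>
     (\<forall>i j. ((\<lambda>t. P t i j) \<longlongrightarrow> P 0 i j) (at_right 0))"

definition is_Q_matrix_of :: "('a \<Rightarrow> 'a \<Rightarrow> real) \<Rightarrow> (real \<Rightarrow> 'a \<Rightarrow> 'a \<Rightarrow> real) \<Rightarrow> bool" where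
  "is_Q_matrix_of q P \<longleftrightarrow>
     (\<forall>i j. ((\<lambda>t. P t i j) has_real_derivative q i j) (at 0 within {0..}))"

text \<open>q_i = - q_ii; stable (finite, automatic for real entries) and conservative:
  q_i = \<Sum>_{j \<noteq> i} q_ij.\<close>
definition conservative :: "('a \<Rightarrow> 'a \<Rightarrow> real) \<Rightarrow> bool" where
  "conservative q \<longleftrightarrow> (\<forall>i. ((\<lambda>j. q i j) has_sum (- q i i)) (UNIV - {i}))"

definition Q_norm :: "('a \<Rightarrow> 'a \<Rightarrow> real) \<Rightarrow> real" where
  "Q_norm q = (SUP i. (\<Sum>\<^sub>\<infinity>j. \<bar>q i j\<bar>))"

definition tv_dist :: "('a \<Rightarrow> real) \<Rightarrow> ('a \<Rightarrow> real) \<Rightarrow> real" where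
  "tv_dist \<mu>1 \<mu>2 = (1/2) * (\<Sum>\<^sub>\<infinity>\<sigma>. \<bar>\<mu>1 \<sigma> - \<mu>2 \<sigma>\<bar>)"

definition initial_state_identifiable :: "(real \<Rightarrow> 'a \<Rightarrow> 'a \<Rightarrow> real) \<Rightarrow> bool" where
  "initial_state_identifiable P \<longleftrightarrow>
     (\<forall>t\<ge>0. \<forall>i j. i \<noteq> j \<longrightarrow> (\<lambda>k. P t i k) \<noteq> (\<lambda>k. P t j k))"

end

theory Submission
  imports Defs
begin

lemma tfD:
  assumes "transition_function P"
  shows "t\<ge>0 \<Longrightarrow> P t i j \<ge> 0" "t \<ge> 0 \<Longrightarrow> ((\<lambda>j. P t i j) has_sum 1) UNIV"
    "P 0 i j = (if i = j then 1 else 0)"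
    "s\<ge>0 \<Longrightarrow> t\<ge>0 \<Longrightarrow> P (s + t) i j = (\<Sum>\<^sub>\<infinity>k. P s i k * P t k j)"
  using assms unfolding transition_function_def by auto

lemma tf_le1:
  assumes "transition_function P" "t \<ge> 0"
  shows "P t i j \<le> 1"
proof -
  have "sum (\<lambda>j. P t i j) {j} \<le> 1"
    by (rule finite_sum_le_has_sum[OF tfD(2)[OF assms]]) (auto intro: tfD(1)[OF assms(1) assms(2)])
  thus ?thesis by simp
qed

lemma tf_summ_prod:
  assumes "transition_function P" "s \<ge> 0" "t \<ge> 0"
  shows "(\<lambda>k. P s i k * P t k j) summable_on UNIV"
proof (rule summable_on_comparison_test[where f="\<lambda>k. P s i k"])
  show "(\<lambda>k. P s i k) summable_on UNIV" using tfD(2)[OF assms(1,2)] has_sum_imp_summable by blast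
  fix k
  show "P s i k * P t k j \<le> P s i k"
    using tfD(1)[OF assms(1,2)] tf_le1[OF assms(1,3)] by (simp add: mult_left_le)
  show "0 \<le> P s i k * P t k j" using tfD(1)[OF assms(1,2)] tfD(1)[OF assms(1,3)] by simp
qed

lemma tf_CK_has_sum:
  assumes "transition_function P" "s \<ge> 0" "t \<ge> 0"
  shows "((\<lambda>k. P s i k * P t k j) has_sum P (s+t) i j) UNIV"
  using tf_summ_prod[OF assms, of i j] tfD(4)[OF assms(1,2,3), of i j]
  by (simp add: summable_iff_has_sum_infsum)

lemma tf_CK_ge:
  assumes "transition_function P" "s \<ge> 0" "t \<ge> 0"
  shows "P s i k * P t k j \<le> P (s+t) i j"
proof -
  have "sum (\<lambda>k. P s i k * P t k j) {k} \<le> P (s+t) i j"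
    by (rule finite_sum_le_has_sum[OF tf_CK_has_sum[OF assms]])
       (auto intro!: mult_nonneg_nonneg tfD(1)[OF assms(1)] assms)
  thus ?thesis by simp
qed

lemma diag_pow:
  assumes "transition_function P" "h \<ge> 0"
  shows "P h i i ^ n \<le> P (real n * h) i i"
proof (induction n)
  case 0
  then show ?case using tfD(3)[OF assms(1)] by simp
next
  case (Suc n)
  have "P h i i ^ Suc n = P h i i * P h i i ^ n" by simp
  also have "\<dots> \<le> P h i i * P (real n * h) i i"
    using Suc tfD(1)[OF assms] by (simp add: mult_left_mono)
  also have "\<dots> \<le> P (h + real n * h) i i"
    by (rule tf_CK_ge[OF assms(1,2)]) (use assms in simp)
  also have "h + real n * h = real (Suc n) * h" by (simp add: algebra_simps)
  finally show ?case .
qed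


lemma deriv_right:
  assumes "transition_function P" "is_Q_matrix_of q P"
  shows "((\<lambda>h. (P h i j - P 0 i j) / h) \<longlongrightarrow> q i j) (at_right 0)"
proof -
  have "((\<lambda>h. (P h i j - P 0 i j) / (h - 0)) \<longlongrightarrow> q i j) (at 0 within {0..})"
    using assms(2) unfolding is_Q_matrix_of_def has_field_derivative_iff by blast
  hence "((\<lambda>h. (P h i j - P 0 i j) / (h - 0)) \<longlongrightarrow> q i j) (at_right 0)"
    by (rule tendsto_mono[rotated]) (rule at_le, auto)
  thus ?thesis by simp
qed

lemma q_offdiag_nonneg:
  assumes "transition_function P" "is_Q_matrix_of q P" "i \<noteq> j"
  shows "q i j \<ge> 0"
proof (rule tendsto_lowerbound[OF deriv_right[OF assms(1,2)]])
  show "\<forall>\<^sub>F h in at_right 0. 0 \<le> (P h i j - P 0 i j) / h"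
    unfolding eventually_at_right_field
    using tfD(1,3)[OF assms(1)] assms(3) by (intro exI[of _ 1]) auto
qed simp

lemma q_diag_nonpos:
  assumes "transition_function P" "is_Q_matrix_of q P"
  shows "q i i \<le> 0"
proof (rule tendsto_upperbound[OF deriv_right[OF assms(1,2)]])
  show "\<forall>\<^sub>F h in at_right 0. (P h i i - P 0 i i) / h \<le> 0"
    unfolding eventually_at_right_field
    using tfD(3)[OF assms(1)] tf_le1[OF assms(1)]
    by (intro exI[of _ 1]) (auto simp: divide_nonpos_pos)
qed simp

lemma diag_exp_eps:
  assumes tf: "transition_function P" and Q: "is_Q_matrix_of q P" and t: "t > 0" and e: "\<epsilon> > 0"
  shows "exp ((q i i - \<epsilon>) * t) \<le> P t i i"
proof -
  have "\<forall>\<^sub>F h in at_right 0. (P h i i - P 0 i i) / h > q i i - \<epsilon>"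
    using order_tendstoD(1)[OF deriv_right[OF tf Q, of i i]] e by simp
  then obtain b where b: "b > 0" and hb: "\<And>h. h > 0 \<Longrightarrow> h < b \<Longrightarrow> (P h i i - 1) / h > q i i - \<epsilon>"
    unfolding eventually_at_right_field using tfD(3)[OF tf] by auto
  obtain N :: nat where N: "real N > max (t / b) ((\<epsilon> - q i i) * t)"
    using reals_Archimedean2 by blast
  have "\<forall>n\<ge>N. (1 + (q i i - \<epsilon>) * t / real n) ^ n \<le> P t i i"
  proof (intro allI impI)
    fix n assume n: "n \<ge> N"
    have nN: "real n \<ge> real N" using n by simp
    have tb: "t / b > 0" using t b by simp
    hence npos: "real n > 0" using N nN by linarith
    define h where "h = t / real n"
    have h0: "h > 0" unfolding h_def using t npos by simp
    have bn: "b * real N \<le> b * real n" using nN b by simp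
    have "t < b * real N" using N b by (simp add: divide_less_eq mult.commute)
    hence "t / real n < b"
      using bn npos by (simp add: divide_less_eq mult.commute)
    hence hb': "h < b" unfolding h_def .
    have "(P h i i - 1) / h > q i i - \<epsilon>" using hb[OF h0 hb'] .
    hence P1: "P h i i \<ge> 1 + (q i i - \<epsilon>) * h" using h0 by (simp add: less_divide_eq)
    have "(\<epsilon> - q i i) * t < real n" using N nN by linarith
    hence "(\<epsilon> - q i i) * t / real n < 1" using npos by simp
    moreover have "(q i i - \<epsilon>) * h = - ((\<epsilon> - q i i) * t / real n)" unfolding h_def using npos by (simp add: field_simps)
    ultimately have base: "0 \<le> 1 + (q i i - \<epsilon>) * h" by linarith
    have "(1 + (q i i - \<epsilon>) * t / real n) ^ n = (1 + (q i i - \<epsilon>) * h) ^ n"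
      unfolding h_def by simp
    also have "\<dots> \<le> P h i i ^ n" by (rule power_mono[OF P1 base])
    also have "\<dots> \<le> P (real n * h) i i" by (rule diag_pow[OF tf]) (use h0 in simp)
    also have "real n * h = t" unfolding h_def using npos by simp
    finally show "(1 + (q i i - \<epsilon>) * t / real n) ^ n \<le> P t i i" .
  qed
  thus ?thesis
    by (intro LIMSEQ_le_const2[OF tendsto_exp_limit_sequentially]) blast
qed

lemma diag_exp:
  assumes tf: "transition_function P" and Q: "is_Q_matrix_of q P" and t: "t \<ge> 0"
  shows "exp (q i i * t) \<le> P t i i"
proof (cases "t = 0")
  case True then show ?thesis using tfD(3)[OF tf] by simp
next
  case False
  hence t: "t > 0" using t by simp
  have lim: "(\<lambda>m. exp ((q i i + - inverse (real (Suc m))) * t)) \<longlonglongrightarrow> exp (q i i * t)"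
    by (intro tendsto_intros LIMSEQ_inverse_real_of_nat_add_minus)
  show ?thesis
  proof (rule LIMSEQ_le_const2[OF lim], intro exI allI impI)
    fix m :: nat
    show "exp ((q i i + - inverse (real (Suc m))) * t) \<le> P t i i"
      using diag_exp_eps[OF tf Q t, of "inverse (real (Suc m))" i] by simp
  qed
qed


lemma has_sum_finsum:
  fixes f :: "'k \<Rightarrow> 'a \<Rightarrow> real"
  assumes "finite F" "\<And>k. k \<in> F \<Longrightarrow> (f k has_sum S k) A"
  shows "((\<lambda>x. \<Sum>k\<in>F. f k x) has_sum (\<Sum>k\<in>F. S k)) A"
  using assms
proof (induction F rule: finite_induct)
  case empty then show ?case by simp
next
  case (insert a F)
  then show ?case by (simp add: has_sum_add)
qed

lemma has_sum_diff_real: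
  fixes f g :: "'a \<Rightarrow> real"
  assumes "(f has_sum a) A" "(g has_sum b) A"
  shows "((\<lambda>x. f x - g x) has_sum (a - b)) A"
proof -
  have "((\<lambda>x. - g x) has_sum (- b)) A" using assms(2) by (simp add: has_sum_uminus)
  from has_sum_add[OF assms(1) this] show ?thesis by simp
qed

lemma abs_summable_real:
  fixes f :: "'a \<Rightarrow> real"
  shows "f summable_on A \<Longrightarrow> (\<lambda>x. \<bar>f x\<bar>) summable_on A"
  using summable_on_iff_abs_summable_on_real[of f A] by simp

lemma row_diff_has_sum:
  assumes tf: "transition_function P" and t: "t \<ge> 0"
  shows "((\<lambda>k. P t i k - P t j k) has_sum 0) UNIV"
  using has_sum_diff_real[OF tfD(2)[OF tf t, of i] tfD(2)[OF tf t, of j]] by simp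

lemma row_diff_abs_summable:
  assumes tf: "transition_function P" and t: "t \<ge> 0"
  shows "(\<lambda>k. \<bar>P t i k - P t j k\<bar>) summable_on UNIV"
  using abs_summable_real has_sum_imp_summable row_diff_has_sum[OF assms] by blast

lemma tv_step:
  assumes tf: "transition_function P" and s: "s \<ge> 0" and t: "t \<ge> 0"
    and m: "m > 0" and mP: "\<And>l. m \<le> P s l l"
  shows "(2*m-1) * (\<Sum>\<^sub>\<infinity>k. \<bar>P t i k - P t j k\<bar>) \<le> (\<Sum>\<^sub>\<infinity>k. \<bar>P (t+s) i k - P (t+s) j k\<bar>)"
proof -
  define D where "D k = P t i k - P t j k" for k
  define E where "E k = P (t+s) i k - P (t+s) j k" for k
  define N where "N = (\<Sum>\<^sub>\<infinity>k. \<bar>D k\<bar>)"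
  define N' where "N' = (\<Sum>\<^sub>\<infinity>k. \<bar>E k\<bar>)"
  have ts: "t + s \<ge> 0" using s t by simp
  have Dsum: "(\<lambda>k. \<bar>D k\<bar>) summable_on UNIV" unfolding D_def by (rule row_diff_abs_summable[OF tf t])
  have Esum: "(\<lambda>k. \<bar>E k\<bar>) summable_on UNIV" unfolding E_def by (rule row_diff_abs_summable[OF tf ts])
  have Pnn: "\<And>l k. P s l k \<ge> 0" using tfD(1)[OF tf s] by blast
  have Ple: "\<And>l k. P s l k \<le> 1" using tf_le1[OF tf s] by blast
  have Ehas: "((\<lambda>l. D l * P s l k) has_sum E k) UNIV" for k
  proof -
    have "((\<lambda>l. P t i l * P s l k - P t j l * P s l k) has_sum E k) UNIV"
      unfolding E_def by (rule has_sum_diff_real[OF tf_CK_has_sum[OF tf t s] tf_CK_has_sum[OF tf t s]])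
    thus ?thesis unfolding D_def by (simp add: algebra_simps)
  qed
  define h where "h k l = (if l = k then 0 else D l * P s l k)" for k l
  have hhas: "(h k has_sum (E k - D k * P s k k)) UNIV" for k
  proof -
    have "((\<lambda>l. if l = k then D k * P s k k else 0) has_sum (D k * P s k k)) UNIV"
      using has_sum_cong_neutral[of UNIV "{k}" "\<lambda>l. if l = k then D k * P s k k else 0"
          "\<lambda>l. if l = k then D k * P s k k else 0" "D k * P s k k"]
      by (simp add: has_sum_finiteI)
    from has_sum_diff_real[OF Ehas this] show ?thesis
      by (rule has_sum_cong[THEN iffD1, rotated]) (auto simp: h_def)
  qed
  define g where "g k l = (if l = k then 0 else \<bar>D l\<bar> * P s l k)" for k l
  have gabs: "g k l = \<bar>h k l\<bar>" for k l
    unfolding g_def h_def using Pnn by (simp add: abs_mult)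
  have gsum: "g k summable_on UNIV" for k
    by (rule summable_on_comparison_test[OF Dsum])
       (auto simp: g_def intro!: mult_left_le Ple Pnn mult_nonneg_nonneg)
  have Ebound: "\<bar>D k\<bar> * P s k k - (\<Sum>\<^sub>\<infinity>l. g k l) \<le> \<bar>E k\<bar>" for k
  proof -
    have "(\<lambda>l. norm (h k l)) summable_on UNIV" using gsum[of k] gabs[of k, symmetric] by (simp add: fun_eq_iff)
    hence "norm (infsum (h k) UNIV) \<le> (\<Sum>\<^sub>\<infinity>l. norm (h k l))" by (rule norm_infsum_bound)
    moreover have "infsum (h k) UNIV = E k - D k * P s k k" using hhas infsumI by blast
    moreover have "(\<Sum>\<^sub>\<infinity>l. norm (h k l)) = (\<Sum>\<^sub>\<infinity>l. g k l)" using gabs by simp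
    ultimately have "\<bar>E k - D k * P s k k\<bar> \<le> (\<Sum>\<^sub>\<infinity>l. g k l)" by simp
    moreover have "\<bar>D k * P s k k\<bar> = \<bar>D k\<bar> * P s k k" using Pnn by (simp add: abs_mult)
    ultimately show ?thesis by linarith
  qed
  have Fbound: "m * sum (\<lambda>k. \<bar>D k\<bar>) F \<le> N' + (1 - m) * N" if F: "finite F" for F
  proof -
    have gF: "((\<lambda>l. \<Sum>k\<in>F. g k l) has_sum (\<Sum>k\<in>F. (\<Sum>\<^sub>\<infinity>l. g k l))) UNIV"
      by (rule has_sum_finsum[OF F]) (use gsum in auto)
    have gFle: "(\<Sum>k\<in>F. g k l) \<le> \<bar>D l\<bar> * (1 - m)" for l
    proof -
      have e1: "(\<Sum>k\<in>F. g k l) = \<bar>D l\<bar> * (\<Sum>k\<in>F. (if l = k then 0 else P s l k))"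
        unfolding g_def sum_distrib_left by (rule sum.cong) auto
      have e2: "(\<Sum>k\<in>F. (if l = k then 0 else P s l k)) = (\<Sum>k\<in>F - {l}. P s l k)"
        using F by (simp add: sum.If_cases Diff_eq Int_commute)
      have e3: "(\<Sum>k\<in>F - {l}. P s l k) \<le> 1 - m"
      proof -
        have "(\<Sum>k\<in>insert l (F - {l}). P s l k) \<le> 1"
          by (rule finite_sum_le_has_sum[OF tfD(2)[OF tf s]]) (use F Pnn in auto)
        thus ?thesis using F mP[of l] by (simp add: sum.insert_remove)
      qed
      have "\<bar>D l\<bar> * (\<Sum>k\<in>F - {l}. P s l k) \<le> \<bar>D l\<bar> * (1 - m)"
        by (rule mult_left_mono[OF e3]) simp
      thus ?thesis using e1 e2 by simp
    qed
    have "(\<Sum>k\<in>F. (\<Sum>\<^sub>\<infinity>l. g k l)) = (\<Sum>\<^sub>\<infinity>l. \<Sum>k\<in>F. g k l)" using gF infsumI by metis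
    also have "\<dots> \<le> (\<Sum>\<^sub>\<infinity>l. \<bar>D l\<bar> * (1 - m))"
      by (rule infsum_mono[OF has_sum_imp_summable[OF gF] summable_on_cmult_left[OF Dsum] gFle])
    also have "\<dots> = (1 - m) * N" unfolding N_def by (simp add: infsum_cmult_left[OF Dsum] mult.commute)
    finally have A: "(\<Sum>k\<in>F. (\<Sum>\<^sub>\<infinity>l. g k l)) \<le> (1 - m) * N" .
    have "m * sum (\<lambda>k. \<bar>D k\<bar>) F \<le> (\<Sum>k\<in>F. \<bar>D k\<bar> * P s k k)"
      unfolding sum_distrib_left by (rule sum_mono) (simp add: mult.commute[of m] mult_left_mono mP)
    also have "\<dots> \<le> (\<Sum>k\<in>F. \<bar>E k\<bar> + (\<Sum>\<^sub>\<infinity>l. g k l))"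
      by (rule sum_mono) (metis Ebound diff_le_eq)
    also have "\<dots> = (\<Sum>k\<in>F. \<bar>E k\<bar>) + (\<Sum>k\<in>F. (\<Sum>\<^sub>\<infinity>l. g k l))" by (simp add: sum.distrib)
    also have "(\<Sum>k\<in>F. \<bar>E k\<bar>) \<le> N'"
      unfolding N'_def by (rule finite_sum_le_infsum[OF Esum F]) auto
    finally show ?thesis using A by linarith
  qed
  have "N \<le> (N' + (1 - m) * N) / m"
    unfolding N_def
  proof (rule infsum_le_finite_sums[OF Dsum])
    fix F :: "'a set" assume "finite F"
    from Fbound[OF this] m show "sum (\<lambda>k. \<bar>D k\<bar>) F \<le> (N' + (1 - m) * (\<Sum>\<^sub>\<infinity>k. \<bar>D k\<bar>)) / m"
      unfolding N_def by (simp add: le_divide_eq mult.commute)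
  qed
  hence "m * N \<le> N' + (1 - m) * N" using m by (simp add: le_divide_eq mult.commute)
  hence "(2*m-1) * N \<le> N'" by (simp add: algebra_simps)
  thus ?thesis unfolding N_def N'_def D_def E_def .
qed


lemma N0:
  assumes tf: "transition_function P" and ij: "i \<noteq> j"
  shows "(\<Sum>\<^sub>\<infinity>k. \<bar>P 0 i k - P 0 j k\<bar>) = 2"
proof -
  let ?f = "\<lambda>k. \<bar>P 0 i k - P 0 j k\<bar>"
  have fin: "(?f has_sum 2) {i, j}"
    by (rule has_sum_finiteI) (use ij tfD(3)[OF tf] in auto)
  have "(?f has_sum 2) UNIV"
    by (rule has_sum_cong_neutral[of "{i,j}" UNIV ?f ?f, THEN iffD2, OF _ _ _ fin])
       (use tfD(3)[OF tf] in auto)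
  thus ?thesis by (rule infsumI)
qed

lemma N_pow:
  assumes tf: "transition_function P" and ij: "i \<noteq> j" and h: "h \<ge> 0"
    and m: "m > 0" "2*m - 1 \<ge> 0" and mP: "\<And>l. m \<le> P h l l"
  shows "2 * (2*m-1)^n \<le> (\<Sum>\<^sub>\<infinity>k. \<bar>P (real n * h) i k - P (real n * h) j k\<bar>)"
proof (induction n)
  case 0
  then show ?case using N0[OF tf ij] by simp
next
  case (Suc n)
  have nh: "real n * h \<ge> 0" using h by simp
  have "2 * (2*m-1)^Suc n = (2*m-1) * (2 * (2*m-1)^n)" by simp
  also have "\<dots> \<le> (2*m-1) * (\<Sum>\<^sub>\<infinity>k. \<bar>P (real n * h) i k - P (real n * h) j k\<bar>)"
    by (rule mult_left_mono[OF Suc m(2)])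
  also have "\<dots> \<le> (\<Sum>\<^sub>\<infinity>k. \<bar>P (real n * h + h) i k - P (real n * h + h) j k\<bar>)"
    by (rule tv_step[OF tf h nh m(1) mP])
  also have "real n * h + h = real (Suc n) * h" by (simp add: algebra_simps)
  finally show ?case .
qed

lemma row_abs_sum_Q:
  assumes tf: "transition_function P" and Q: "is_Q_matrix_of q P" and C: "conservative q"
  shows "(\<Sum>\<^sub>\<infinity>j. \<bar>q i j\<bar>) = 2 * (- q i i)"
proof -
  have h1: "((\<lambda>j. q i j) has_sum (- q i i)) (UNIV - {i})" using C unfolding conservative_def by blast
  have h2: "((\<lambda>j. \<bar>q i j\<bar>) has_sum (- q i i)) (UNIV - {i})"
    using h1 q_offdiag_nonneg[OF tf Q] by (subst has_sum_cong) auto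
  have "((\<lambda>j. \<bar>q i j\<bar>) has_sum (\<bar>q i i\<bar> + - q i i)) (insert i (UNIV - {i}))"
    by (rule has_sum_insert[OF _ h2]) simp
  moreover have "insert i (UNIV - {i}) = UNIV" by auto
  moreover have "\<bar>q i i\<bar> = - q i i" using q_diag_nonpos[OF tf Q] by simp
  ultimately show ?thesis using infsumI by fastforce
qed

theorem mainTheorem10:
  fixes P :: "real \<Rightarrow> 'a::countable \<Rightarrow> 'a \<Rightarrow> real"
    and q :: "'a \<Rightarrow> 'a \<Rightarrow> real"
  assumes "transition_function P"
    and "is_Q_matrix_of q P"
    and "conservative q"
    and "bdd_above (range (\<lambda>i. - q i i))"
  shows "(\<forall>t\<ge>0. \<forall>i j. i \<noteq> j \<longrightarrow>
            tv_dist (\<lambda>k. P t i k) (\<lambda>k. P t j k) \<ge> exp (- t * Q_norm q)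
            \<and> exp (- t * Q_norm q) > 0)
         \<and> Q_norm q = (SUP i. 2 * (- q i i))
         \<and> initial_state_identifiable P"
proof -
  note tf = assms(1) and Q = assms(2) and C = assms(3)
  have QN: "Q_norm q = (SUP i. 2 * (- q i i))"
    unfolding Q_norm_def using row_abs_sum_Q[OF tf Q C] by simp
  obtain b where b: "\<And>i. - q i i \<le> b" using assms(4) by (auto simp: bdd_above_def)
  have bdd2: "bdd_above (range (\<lambda>i. 2 * (- q i i)))"
    by (rule bdd_aboveI[of _ "2*b"]) (use b in fastforce)
  define c where "c = Q_norm q / 2"
  have qc: "- q l l \<le> c" for l
  proof -
    have "2 * (- q l l) \<le> Q_norm q" unfolding QN by (rule cSUP_upper[OF _ bdd2]) simp
    thus ?thesis unfolding c_def by simp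
  qed
  have c0: "c \<ge> 0" using qc[of undefined] q_diag_nonpos[OF tf Q, of undefined] by linarith
  have Pc: "exp (- c * h) \<le> P h l l" if "h \<ge> 0" for h l
  proof -
    have "(- c) * h \<le> q l l * h" by (rule mult_right_mono) (use qc[of l] that in auto)
    hence "exp (- c * h) \<le> exp (q l l * h)" by simp
    also have "\<dots> \<le> P h l l" by (rule diag_exp[OF tf Q that])
    finally show ?thesis .
  qed
  have TV: "exp (- t * Q_norm q) \<le> tv_dist (\<lambda>k. P t i k) (\<lambda>k. P t j k)"
    if t: "t \<ge> 0" and ij: "i \<noteq> j" for t i j
  proof (cases "t = 0")
    case True
    then show ?thesis unfolding tv_dist_def using N0[OF tf ij] by simp
  next
    case False
    hence tp: "t > 0" using t by simp
    obtain N :: nat where N: "real N > 2 * c * t" using reals_Archimedean2 by blast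
    have "\<forall>n\<ge>Suc N. (1 + (- (2 * c * t)) / real n) ^ n \<le> tv_dist (\<lambda>k. P t i k) (\<lambda>k. P t j k)"
    proof (intro allI impI)
      fix n assume n: "n \<ge> Suc N"
      have npos: "real n > 0" using n by simp
      have nN: "real n > 2 * c * t" using N n by linarith
      define h where "h = t / real n"
      have h0: "h \<ge> 0" unfolding h_def using t by simp
      define m where "m = exp (- c * h)"
      have mpos: "m > 0" unfolding m_def by simp
      have base: "0 \<le> 1 + (- (2 * c * t)) / real n"
        using nN npos by (simp add: field_simps)
      have "1 + (- (2 * c * t)) / real n = 1 - 2 * (c * h)" unfolding h_def by (simp add: field_simps)
      also have "\<dots> \<le> 2 * m - 1"
        using exp_ge_add_one_self[of "- c * h"] unfolding m_def by simp
      finally have mb: "1 + (- (2 * c * t)) / real n \<le> 2 * m - 1" .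
      hence m2: "2 * m - 1 \<ge> 0" using base by linarith
      have "(1 + (- (2 * c * t)) / real n) ^ n \<le> (2 * m - 1) ^ n"
        by (rule power_mono[OF mb base])
      also have "\<dots> \<le> (\<Sum>\<^sub>\<infinity>k. \<bar>P (real n * h) i k - P (real n * h) j k\<bar>) / 2"
        using N_pow[OF tf ij h0 mpos m2, of n] unfolding m_def using Pc[OF h0] by simp
      also have "real n * h = t" unfolding h_def using npos by simp
      finally show "(1 + (- (2 * c * t)) / real n) ^ n \<le> tv_dist (\<lambda>k. P t i k) (\<lambda>k. P t j k)"
        unfolding tv_dist_def by simp
    qed
    hence "exp (- (2 * c * t)) \<le> tv_dist (\<lambda>k. P t i k) (\<lambda>k. P t j k)"
      by (intro LIMSEQ_le_const2[OF tendsto_exp_limit_sequentially]) blast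
    moreover have "- (2 * c * t) = - t * Q_norm q" unfolding c_def by simp
    ultimately show ?thesis by simp
  qed
  have ISI: "initial_state_identifiable P"
    unfolding initial_state_identifiable_def
  proof (intro allI impI notI)
    fix t :: real and i j assume t: "t \<ge> 0" and ij: "i \<noteq> j"
      and eq: "(\<lambda>k. P t i k) = (\<lambda>k. P t j k)"
    have "tv_dist (\<lambda>k. P t i k) (\<lambda>k. P t j k) = 0" unfolding tv_dist_def eq by simp
    moreover have "exp (- t * Q_norm q) > 0" by simp
    ultimately show False using TV[OF t ij] by simp
  qed
  show ?thesis using TV QN ISI by simp
qed

end
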